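(* Let $\mathcal V$ be a finite vocabulary and $C\ge 2$ an integer. For each $i\in\{1,\dots,C\}$ let $w_i:\mathcal V\to\mathbb R$ be arbitrary maps such that there exist a token $\tau\in\mathcal V$ and an index $i\in\{2,\dots,C\}$ with $w_i(\tau)\neq 0$, and let $b\in\mathbb R$. Then there is no parametrization of a single-layer transformer $F$ (with $L=1$, any number $H\ge 1$ of heads, either encoder-only or decoder-only) such that for every sequence $\mathbf t=[t_1,\dots,t_{|\mathbf t|}]$ over $\mathcal V$ with $1\le|\mathbf t|\le C$, $$F(\mathbf t)=b+\sum_{i=1}^{|\mathbf t|} w_i(t_i).$$
   Context: Let $\mathcal V$ be a finite vocabulary and $C\ge 2$ the context length; inputs are sequences $\mathbf t=[t_1,\dots,t_{|\mathbf t|}]$ with $t_i\in\mathcal V$ and $1\le|\mathbf t|\le C$. An $L$-layer transformer (without positional embeddings) with embedding dimension $d$, head dimension $d_h$ and $H\ge 1$ heads per layer is specified by: an embedding map $e:\mathcal V\to\mathbb R^d$; for each layer $l\in\{1,\dots,L\}$ and head $h\in\{1,\dots,H\}$, matrices $W_Q^{(l,h)},W_K^{(l,h)},W_V^{(l,h)}\in\mathbb R^{d\times d_h}$, vectors $b_Q^{(l,h)},b_K^{(l,h)},b_V^{(l,h)}\in\mathbb R^{d_h}$ and a linear map $P_{l,h}:\mathbb R^{d_h}\to\mathbb R^d$; for each layer an arbitrary function $\mathrm{ffn}_l:\mathbb R^d\to\mathbb R^d$; and an arbitrary classification head $\mathrm{cls}:\mathbb R^d\to\mathbb R^2$. A parametrization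 is any choice of all these objects. On input $\mathbf t$, set $h_i^{(0)}=e(t_i)$. In layer $l$, for each head $h$ compute $q_i=(W_Q^{(l,h)})^\top h_i^{(l-1)}+b_Q^{(l,h)}$, $k_i=(W_K^{(l,h)})^\top h_i^{(l-1)}+b_K^{(l,h)}$, $v_i=(W_V^{(l,h)})^\top h_i^{(l-1)}+b_V^{(l,h)}$; attention weights $a_{ij}=\exp(q_i^\top k_j/\sqrt{d_h})/\sum_{j'\in J_i}\exp(q_i^\top k_{j'}/\sqrt{d_h})$ for $j\in J_i$ and $a_{ij}=0$ for $j\notin J_i$, where $J_i=\{1,\dots,|\mathbf t|\}$ for an encoder-only model and $J_i=\{1,\dots,i\}$ for a decoder-only model (causal mask); head output $s_i^{(h)}=\sum_{j} a_{ij}v_j$. Then $h_i^{(l)}=\mathrm{ffn}_l\big(h_i^{(l-1)}+\sum_{h=1}^H P_{l,h}(s_i^{(h)})\big)$. The output (log odds) is $F(\mathbf t)=\Delta(\mathrm{cls}(h_r^{(L)}))$, where $\Delta(\ell)=\ell_1-\ell_0$ for $\ell=(\ell_0,\ell_1)\in\mathbb R^2$, and $r=1$ for encoder-only models, $r=|\mathbf t|$ for decoder-only models. *)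

theory Defs
  imports "HOL-Analysis.Analysis"
begin

text \<open>Transformers without positional embeddings. Vectors in R^d / R^{d_h} are
  represented as real^'d / real^'h for finite index types 'd, 'h (so d = CARD('d),
  d_h = CARD('h)); heads are indexed by a finite type 'k (H = CARD('k)).
  A d x d_h matrix W is an element of real^'h^'d; the map x |-> W^T x + b is
  transpose W *v x + b.  P_{l,h} : R^{d_h} -> R^d is a matrix in real^'h^'d.
  Positions are 0-indexed internally: position i (0-based) is token t_{i+1}.\<close>

text \<open>Output of one attention head at (0-based) position i.
  dec = True: decoder-only (causal mask J_i = {1..i}); dec = False: encoder-only.\<close>
definition head_out ::
  "bool \<Rightarrow> real^'h^'d \<Rightarrow> real^'h^'d \<Rightarrow> real^'h^'d \<Rightarrow> real^'h \<Rightarrow> real^'h \<Rightarrow> real^'h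
   \<Rightarrow> (real^'d::finite) list \<Rightarrow> nat \<Rightarrow> real^'h::finite" where
  "head_out dec WQ WK WV bQ bK bV xs i =
     (let J = (if dec then {0..i} else {0..<length xs});
          q = (\<lambda>j. transpose WQ *v (xs ! j) + bQ);
          k = (\<lambda>j. transpose WK *v (xs ! j) + bK);
          v = (\<lambda>j. transpose WV *v (xs ! j) + bV);
          sc = (\<lambda>j. exp ((q i \<bullet> k j) / sqrt (real CARD('h))))
      in (\<Sum>j\<in>J. (sc j / (\<Sum>j'\<in>J. sc j')) *\<^sub>R v j))"

definition tf_layer ::
  "bool \<Rightarrow> ('k::finite \<Rightarrow> real^'h^'d) \<Rightarrow> ('k \<Rightarrow> real^'h^'d) \<Rightarrow> ('k \<Rightarrow> real^'h^'d)
   \<Rightarrow> ('k \<Rightarrow> real^'h) \<Rightarrow> ('k \<Rightarrow> real^'h) \<Rightarrow> ('k \<Rightarrow> real^'h)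
   \<Rightarrow> ('k \<Rightarrow> real^'h::finite^'d::finite) \<Rightarrow> (real^'d \<Rightarrow> real^'d)
   \<Rightarrow> (real^'d) list \<Rightarrow> (real^'d) list" where
  "tf_layer dec WQ WK WV bQ bK bV P ffn xs =
     map (\<lambda>i. ffn (xs ! i + (\<Sum>hd\<in>UNIV.
                 P hd *v head_out dec (WQ hd) (WK hd) (WV hd) (bQ hd) (bK hd) (bV hd) xs i)))
         [0..<length xs]"

text \<open>Output log-odds F(t) of an L-layer transformer; layer parameters are indexed by
  l \<in> {1..L}. cls maps to R^2 = pairs (l0, l1), and Delta(l0,l1) = l1 - l0.
  Readout position r = 1 (encoder) or r = |t| (decoder).\<close>
definition tf_output ::
  "bool \<Rightarrow> nat \<Rightarrow> ('v \<Rightarrow> real^'d)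
   \<Rightarrow> (nat \<Rightarrow> 'k::finite \<Rightarrow> real^'h^'d) \<Rightarrow> (nat \<Rightarrow> 'k \<Rightarrow> real^'h^'d) \<Rightarrow> (nat \<Rightarrow> 'k \<Rightarrow> real^'h^'d)
   \<Rightarrow> (nat \<Rightarrow> 'k \<Rightarrow> real^'h) \<Rightarrow> (nat \<Rightarrow> 'k \<Rightarrow> real^'h) \<Rightarrow> (nat \<Rightarrow> 'k \<Rightarrow> real^'h)
   \<Rightarrow> (nat \<Rightarrow> 'k \<Rightarrow> real^'h::finite^'d::finite) \<Rightarrow> (nat \<Rightarrow> real^'d \<Rightarrow> real^'d)
   \<Rightarrow> (real^'d \<Rightarrow> real \<times> real) \<Rightarrow> 'v list \<Rightarrow> real" where
  "tf_output dec L e WQ WK WV bQ bK bV P ffn cls ts =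
     (let hL = foldl (\<lambda>hs l. tf_layer dec (WQ l) (WK l) (WV l) (bQ l) (bK l) (bV l) (P l) (ffn l) hs)
                     (map e ts) [1..<Suc L];
          r = (if dec then length ts - 1 else 0);
          out = cls (hL ! r)
      in snd out - fst out)"

end

theory Submission
  imports Defs
begin

lemma avg_const:
  fixes v :: "'a::real_vector"
  assumes "finite J" "J \<noteq> {}" "(c::real) > 0"
  shows "(\<Sum>j\<in>J. (c / (\<Sum>j'\<in>J. c)) *\<^sub>R v) = v"
proof -
  have "card J > 0" using assms by auto
  hence "real (card J) * (c / (real (card J) * c)) = 1" using assms by (simp add: field_simps)
  have "(\<Sum>j\<in>J. (c / (\<Sum>j'\<in>J. c)) *\<^sub>R v) = (\<Sum>j\<in>J. (c / (\<Sum>j'\<in>J. c))) *\<^sub>R v"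
    by (rule scaleR_sum_left[symmetric])
  also have "\<dots> = v" using \<open>real (card J) * (c / (real (card J) * c)) = 1\<close> by simp
  finally show ?thesis .
qed

lemma head_out_const:
  assumes "i < length xs" "\<And>j. j < length xs \<Longrightarrow> xs ! j = x"
  shows "head_out dec WQ WK WV bQ bK bV xs i = transpose WV *v x + bV"
proof -
  define J where "J = (if dec then {0..i} else {0..<length xs})"
  have JJ: "\<And>j. j \<in> J \<Longrightarrow> xs ! j = x" using assms unfolding J_def
    by (auto split: if_splits)
  have fin: "finite J" "J \<noteq> {}" unfolding J_def using assms by auto
  define c where "c = exp (((transpose WQ *v x + bQ) \<bullet> (transpose WK *v x + bK)) / sqrt (real CARD('a)))"
  have cpos: "c > 0" unfolding c_def by simp
  have xi: "xs ! i = x" using assms by auto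
  have "head_out dec WQ WK WV bQ bK bV xs i =
     (\<Sum>j\<in>J. (c / (\<Sum>j'\<in>J. c)) *\<^sub>R (transpose WV *v x + bV))"
    unfolding head_out_def Let_def J_def[symmetric] xi
    apply (rule sum.cong[OF refl])
    using JJ by (simp add: c_def cong: sum.cong)
  also have "\<dots> = transpose WV *v x + bV"
    using fin cpos by (rule avg_const)
  finally show ?thesis .
qed

lemma tf_output_rep:
  assumes "n \<ge> 1"
  shows "tf_output dec 1 e WQ WK WV bQ bK bV P ffn cls (replicate n t)
       = tf_output dec 1 e WQ WK WV bQ bK bV P ffn cls [t]"
proof -
  have L: "tf_layer dec' (WQ (Suc 0)) (WK (Suc 0)) (WV (Suc 0)) (bQ (Suc 0)) (bK (Suc 0)) (bV (Suc 0)) (P (Suc 0)) (ffn (Suc 0)) (replicate m (e t))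
     = replicate m (ffn (Suc 0) (e t + (\<Sum>hd\<in>UNIV. P (Suc 0) hd *v (transpose (WV (Suc 0) hd) *v e t + bV (Suc 0) hd))))" for m dec'
    unfolding tf_layer_def
    apply (rule nth_equalityI)
     apply simp
    apply (simp only: length_map length_upt nth_map nth_upt length_replicate)
    apply (subst head_out_const[where x="e t"])
      apply simp_all
    done
  show ?thesis using assms
    unfolding tf_output_def Let_def using L[of _ 1] by (simp add: L)
qed

theorem proposition4p1:
  fixes C :: nat and w :: "nat \<Rightarrow> 'v::finite \<Rightarrow> real" and b :: real and dec :: bool
  assumes "C \<ge> 2"
    and "\<exists>\<tau> i. i \<in> {2..C} \<and> w i \<tau> \<noteq> 0"
  shows "\<not> (\<exists>(e :: 'v \<Rightarrow> real^'d::finite)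
              (WQ :: nat \<Rightarrow> 'k::finite \<Rightarrow> real^'h::finite^'d) (WK :: nat \<Rightarrow> 'k \<Rightarrow> real^'h^'d)
              (WV :: nat \<Rightarrow> 'k \<Rightarrow> real^'h^'d)
              (bQ :: nat \<Rightarrow> 'k \<Rightarrow> real^'h) (bK :: nat \<Rightarrow> 'k \<Rightarrow> real^'h) (bV :: nat \<Rightarrow> 'k \<Rightarrow> real^'h)
              (P :: nat \<Rightarrow> 'k \<Rightarrow> real^'h^'d) (ffn :: nat \<Rightarrow> real^'d \<Rightarrow> real^'d)
              (cls :: real^'d \<Rightarrow> real \<times> real).
           \<forall>ts :: 'v list. 1 \<le> length ts \<and> length ts \<le> C \<longrightarrow>
              tf_output dec 1 e WQ WK WV bQ bK bV P ffn cls ts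
                = b + (\<Sum>i=1..length ts. w i (ts ! (i - 1))))"
proof
  assume "\<exists>(e :: 'v \<Rightarrow> real^'d::finite)
              (WQ :: nat \<Rightarrow> 'k::finite \<Rightarrow> real^'h::finite^'d) (WK :: nat \<Rightarrow> 'k \<Rightarrow> real^'h^'d)
              (WV :: nat \<Rightarrow> 'k \<Rightarrow> real^'h^'d)
              (bQ :: nat \<Rightarrow> 'k \<Rightarrow> real^'h) (bK :: nat \<Rightarrow> 'k \<Rightarrow> real^'h) (bV :: nat \<Rightarrow> 'k \<Rightarrow> real^'h)
              (P :: nat \<Rightarrow> 'k \<Rightarrow> real^'h^'d) (ffn :: nat \<Rightarrow> real^'d \<Rightarrow> real^'d)
              (cls :: real^'d \<Rightarrow> real \<times> real).
           \<forall>ts :: 'v list. 1 \<le> length ts \<and> length ts \<le> C \<longrightarrow>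
              tf_output dec 1 e WQ WK WV bQ bK bV P ffn cls ts
                = b + (\<Sum>i=1..length ts. w i (ts ! (i - 1)))"
  then obtain e :: "'v \<Rightarrow> real^'d" and WQ :: "nat \<Rightarrow> 'k \<Rightarrow> real^'h^'d" and WK WV bQ bK bV P ffn cls
    where H: "\<And>ts :: 'v list. 1 \<le> length ts \<Longrightarrow> length ts \<le> C \<Longrightarrow>
              tf_output dec 1 e WQ WK WV bQ bK bV P ffn cls ts
                = b + (\<Sum>i=1..length ts. w i (ts ! (i - 1)))" by blast
  obtain \<tau> i where i: "i \<in> {2..C}" "w i \<tau> \<noteq> 0" using assms(2) by blast
  have A: "b + (\<Sum>k=1..n. w k \<tau>) = tf_output dec 1 e WQ WK WV bQ bK bV P ffn cls [\<tau>]"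
    if "1 \<le> n" "n \<le> C" for n
  proof -
    have "b + (\<Sum>k=1..n. w k \<tau>) = b + (\<Sum>k=1..n. w k (replicate n \<tau> ! (k - 1)))"
      by (intro arg_cong[where f="\<lambda>s. b + s"] sum.cong) auto
    also have "\<dots> = tf_output dec 1 e WQ WK WV bQ bK bV P ffn cls (replicate n \<tau>)"
      using H[of "replicate n \<tau>"] that by simp
    also have "\<dots> = tf_output dec 1 e WQ WK WV bQ bK bV P ffn cls [\<tau>]"
      using that(1) by (rule tf_output_rep)
    finally show ?thesis .
  qed
  have "b + (\<Sum>k=1..i. w k \<tau>) = b + (\<Sum>k=1..i-1. w k \<tau>)"
    using A[of i] A[of "i-1"] i by auto
  moreover have "(\<Sum>k=1..i. w k \<tau>) = (\<Sum>k=1..i-1. w k \<tau>) + w i \<tau>"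
    using i by (cases i) (auto simp: sum.atLeast1_atMost_eq)
  ultimately show False using i by simp
qed

end
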